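(* The points $P=(\theta,1)$ and $Q=(\theta,0)$ are saddle fixed points of $F$ of indices $u$ and $u+1$, respectively, that are related by a heterodimensional cycle, i.e. $W^s(P,F)\cap W^u(Q,F)\neq\emptyset$ and $W^u(P,F)\cap W^s(Q,F)\neq\emptyset$.
   Context: Let $f_0,f_1\colon[0,1]\to[0,1]$ be $C^1$ injective maps such that: (F0.i) $f_0$ is increasing and has exactly two fixed points $0$ and $1$, both hyperbolic, with $f_0'(0)=\beta>1$, $f_0'(1)=\lambda\in(0,1)$ and $\lambda\le f_0'(x)\le\beta$ for all $x\in[0,1]$; (F0.ii) there are intervals $I_0=[a_0,b_0]\subset(0,1)$ with $b_0=f_0(a_0)$ and $I_1=[a_1,b_1]$ with $b_1=f_0(a_1)$, and numbers $\alpha>1$, $N\ge1$, with $f_0^N(I_0)=I_1$ and $\lambda\,(f_0^N)'(x)>\alpha$ for all $x\in I_0$; moreover $f_0$ is expanding on $[0,b_0]$ and contracting on $[a_1,1]$; (F1.i) $f_1$ is decreasing with $\gamma'=\min_{[0,1]}|f_1'|\le\gamma=\max_{[0,1]}|f_1'|<1$; (F1.ii) $|f_1'(x)|\ge\bar\alpha>1/\alpha$ for all $x\in[f_1^2(a_1),a_1]$; (F01) $f_1(1)=0$, $f_1([a_1,1])\subset[0,a_0)$, and $[0,f_0^{-2}(b_0))\subset f_1([0,1])$. Setting: $s,u\ge1$ integers, $\widehat{\mathbf C}=[0,1]^{s+u}$, $\Sigma_2=\{0,1\}^{\mathbb Z}$ with shift $\sigma$; $\Phi$ is a diffeomorphism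 of $\mathbb R^{s+u}$ with a horseshoe $\Gamma\subset\widehat{\mathbf C}$ with $s$-dimensional stable and $u$-dimensional unstable bundles, conjugate to $\sigma$ via $\varpi\colon\Gamma\to\Sigma_2$; sub-cubes $\widehat{\mathbf C}_0,\widehat{\mathbf C}_1$ are mapped affinely and in a Markovian way by $\Phi$ into $\widehat{\mathbf C}$, $\widehat{\mathbf C}_i$ containing the points $X\in\Gamma$ with $(\varpi(X))_0=i$; $\theta=\varpi^{-1}(0^{\mathbb Z})=0^{s+u}$, $W^s_{\rm loc}(\theta,\Phi)=[0,1]^s\times\{0^u\}$, $W^u_{\rm loc}(\theta,\Phi)=\{0^s\}\times[0,1]^u$. $\mathbf C=\widehat{\mathbf C}\times[0,1]$, $F(\widehat x,x)=(\Phi(\widehat x),f_i(x))$ if $\widehat x\in\widehat{\mathbf C}_i$. The expansion of $\Phi$ along its unstable direction is stronger than $\beta$ and its contraction along its stable direction is stronger than $\min\{\lambda,\gamma'\}$, so the splitting $E^{ss}\oplus E^c\oplus E^{uu}$ is dominated. The index of a saddle is the dimension of its unstable direction; $W^s(\cdot,F)$, $W^u(\cdot,F)$ denote stable and unstable manifolds of orbits. *)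

theory Defs
  imports "HOL-Analysis.Analysis"
begin

text \<open>Forward stable set of a point p for a map f whose orbits are required to
  stay in the domain D of definition of f.\<close>
definition stable_set :: "('a::topological_space \<Rightarrow> 'a) \<Rightarrow> 'a set \<Rightarrow> 'a \<Rightarrow> 'a set" where
  "stable_set f D p = {x. (\<forall>n. (f ^^ n) x \<in> D) \<and> (\<lambda>n. (f ^^ n) x) \<longlonglongrightarrow> p}"

definition unstable_set :: "('a::topological_space \<Rightarrow> 'a) \<Rightarrow> 'a set \<Rightarrow> 'a \<Rightarrow> 'a set" where
  "unstable_set f D p = {x. \<exists>\<xi>::nat \<Rightarrow> 'a. \<xi> 0 = x \<and> (\<forall>n. \<xi> n \<in> D \<and> f (\<xi> (Suc n)) = \<xi> n)
                              \<and> \<xi> \<longlonglongrightarrow> p}"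

definition local_stable_manifold :: "('a::topological_space \<Rightarrow> 'a) \<Rightarrow> 'a set \<Rightarrow> 'a \<Rightarrow> 'a set" where
  "local_stable_manifold f K p = connected_component_set (stable_set f K p) p"

definition local_unstable_manifold :: "('a::topological_space \<Rightarrow> 'a) \<Rightarrow> 'a set \<Rightarrow> 'a \<Rightarrow> 'a set" where
  "local_unstable_manifold f K p = connected_component_set (unstable_set f K p) p"

definition hyperbolic_linear_index :: "('a::euclidean_space \<Rightarrow> 'a) \<Rightarrow> nat \<Rightarrow> bool" where
  "hyperbolic_linear_index L k \<longleftrightarrow> linear L \<and>
     (\<exists>Es Eu. subspace Es \<and> subspace Eu \<and> Es \<inter> Eu = {0} \<and> (\<forall>v. \<exists>a\<in>Es. \<exists>b\<in>Eu. v = a + b)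
        \<and> L ` Es \<subseteq> Es \<and> L ` Eu \<subseteq> Eu \<and> dim Eu = k
        \<and> (\<exists>c \<mu>. c > 0 \<and> 0 < \<mu> \<and> \<mu> < 1 \<and> (\<forall>n. \<forall>v\<in>Es. norm ((L ^^ n) v) \<le> c * \<mu> ^ n * norm v))
        \<and> (\<exists>c \<mu>. c > 0 \<and> 0 < \<mu> \<and> \<mu> < 1 \<and> (\<forall>n. \<forall>v\<in>Eu. norm v \<le> c * \<mu> ^ n * norm ((L ^^ n) v))))"

definition saddle_of_index :: "('a::euclidean_space \<Rightarrow> 'a) \<Rightarrow> 'a set \<Rightarrow> 'a \<Rightarrow> nat \<Rightarrow> bool" where
  "saddle_of_index f D p k \<longleftrightarrow> p \<in> D \<and> f p = p \<and> 0 < k \<and> k < DIM('a) \<and>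
     (\<exists>L. (f has_derivative L) (at p within D) \<and> hyperbolic_linear_index L k)"

definition Sigma2 :: "(int \<Rightarrow> nat) set" where
  "Sigma2 = {\<omega>. \<forall>n. \<omega> n \<in> {0, 1}}"

definition shift :: "(int \<Rightarrow> nat) \<Rightarrow> (int \<Rightarrow> nat)" where
  "shift \<omega> = (\<lambda>n. \<omega> (n + 1))"

end

theory Submission
  imports Defs
begin


lemma iterA:
  fixes A :: "'a::real_normed_vector \<Rightarrow> 'a"
  assumes "\<forall>x. norm (A x) \<le> m * norm x" "0 \<le> m"
  shows "norm ((A ^^ n) x) \<le> m ^ n * norm (x::'a::real_normed_vector)"
proof (induction n)
  case 0 then show ?case by simp
next
  case (Suc n)
  have "norm ((A ^^ Suc n) x) \<le> m * norm ((A ^^ n) x)" using assms(1) by simp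
  also have "\<dots> \<le> m * (m ^ n * norm x)" using Suc assms(2) by (simp add: mult_left_mono)
  finally show ?case by (simp add: mult.assoc)
qed

lemma iterB:
  fixes B :: "'a::real_normed_vector \<Rightarrow> 'a"
  assumes "\<forall>x. norm (B x) \<ge> m * norm x" "0 \<le> m"
  shows "norm ((B ^^ n) x) \<ge> m ^ n * norm (x::'a::real_normed_vector)"
proof (induction n)
  case 0 then show ?case by simp
next
  case (Suc n)
  have "m * (m ^ n * norm x) \<le> m * norm ((B ^^ n) x)" using Suc assms(2) by (simp add: mult_left_mono)
  also have "\<dots> \<le> norm ((B ^^ Suc n) x)" using assms(1) by simp
  finally show ?case by (simp add: mult.assoc)
qed

lemma iterL:
  fixes A :: "'a \<Rightarrow> 'a" and B :: "'b \<Rightarrow> 'b" and k :: real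
  shows "((\<lambda>v. ((A (fst (fst v)), B (snd (fst v))), k * snd v)) ^^ n) v
    = (((A ^^ n) (fst (fst v)), (B ^^ n) (snd (fst v))), k ^ n * snd v)"
  by (induction n) (auto simp: mult.assoc)

lemma norm_pair_mono:
  "norm a \<le> norm a' \<Longrightarrow> norm b \<le> norm b' \<Longrightarrow> norm (a, b) \<le> norm (a', b')"
  unfolding norm_Pair
  by (intro real_sqrt_le_mono add_mono power_mono) auto

lemma hypP:
  fixes A :: "'a::euclidean_space \<Rightarrow> 'a" and B :: "'b::euclidean_space \<Rightarrow> 'b"
  assumes lin: "linear A" "linear B"
    and As: "\<forall>x. norm (A x) \<le> ms * norm x" and Bu: "\<forall>y. norm (B y) \<ge> mu * norm y"
    and "0 < ms" "ms < k" "0 < k" "k < 1" "1 < mu"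
  shows "hyperbolic_linear_index (\<lambda>v. ((A (fst (fst v)), B (snd (fst v))), k * snd v)) DIM('b)"
proof -
  let ?L = "\<lambda>v::('a\<times>'b)\<times>real. ((A (fst (fst v)), B (snd (fst v))), k * snd v)"
  define Es where "Es = {v::('a\<times>'b)\<times>real. snd (fst v) = 0}"
  define Eu where "Eu = {v::('a\<times>'b)\<times>real. fst (fst v) = 0 \<and> snd v = 0}"
  have A0: "A 0 = 0" and B0: "B 0 = 0" using lin linear_0 by auto
  have linL: "linear ?L"
    using lin unfolding linear_iff by (auto simp: algebra_simps)
  have sEs: "subspace Es" unfolding Es_def subspace_def by auto
  have sEu: "subspace Eu" unfolding Eu_def subspace_def by auto
  have int: "Es \<inter> Eu = {0}" unfolding Es_def Eu_def by (auto simp: prod_eq_iff)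
  have dec: "\<forall>v. \<exists>a\<in>Es. \<exists>b\<in>Eu. v = a + b"
  proof
    fix v :: "('a\<times>'b)\<times>real"
    show "\<exists>a\<in>Es. \<exists>b\<in>Eu. v = a + b"
      by (rule bexI[where x="((fst (fst v), 0), snd v)"], rule bexI[where x="((0, snd (fst v)), 0)"])
         (auto simp: Es_def Eu_def prod_eq_iff)
  qed
  have iEs: "?L ` Es \<subseteq> Es" unfolding Es_def using B0 by auto
  have iEu: "?L ` Eu \<subseteq> Eu" unfolding Eu_def using A0 by auto
  have dEu: "dim Eu = DIM('b)"
  proof -
    have "Eu = (\<lambda>y. ((0::'a, y), 0::real)) ` UNIV" unfolding Eu_def by (auto simp: image_iff prod_eq_iff)
    moreover have "linear (\<lambda>y. ((0::'a, y::'b), 0::real))" unfolding linear_iff by auto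
    moreover have "inj_on (\<lambda>y. ((0::'a, y::'b), 0::real)) (span UNIV)" by (auto simp: inj_on_def)
    ultimately show ?thesis by (simp add: dim_image_eq)
  qed
  have st: "\<forall>n. \<forall>v\<in>Es. norm ((?L ^^ n) v) \<le> 1 * k ^ n * norm v"
  proof (intro allI ballI)
    fix n and v :: "('a\<times>'b)\<times>real" assume "v \<in> Es"
    then have v: "snd (fst v) = 0" by (simp add: Es_def)
    have "norm ((?L ^^ n) v) = norm (((A ^^ n) (fst (fst v)), (B ^^ n) 0), k ^ n * snd v)"
      by (simp add: iterL v)
    also have "(B ^^ n) 0 = 0" by (induction n) (auto simp: B0)
    also have "norm (((A ^^ n) (fst (fst v)), 0::'b), k ^ n * snd v)
       \<le> norm ((k ^ n *\<^sub>R fst (fst v), 0::'b), k ^ n * snd v)"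
    proof (rule norm_pair_mono[OF norm_pair_mono])
      have "norm ((A ^^ n) (fst (fst v))) \<le> ms ^ n * norm (fst (fst v))"
        using iterA[OF As] \<open>0<ms\<close> by simp
      also have "\<dots> \<le> k ^ n * norm (fst (fst v))"
        using \<open>0<ms\<close> \<open>ms<k\<close> by (intro mult_right_mono power_mono) auto
      finally show "norm ((A ^^ n) (fst (fst v))) \<le> norm (k ^ n *\<^sub>R fst (fst v))"
        using \<open>0<k\<close> by simp
    qed auto
    also have "((k ^ n *\<^sub>R fst (fst v), 0::'b), k ^ n * snd v) = k ^ n *\<^sub>R v"
      using v by (auto simp: prod_eq_iff)
    also have "norm (k ^ n *\<^sub>R v) = 1 * k ^ n * norm v" using \<open>0<k\<close> by simp
    finally show "norm ((?L ^^ n) v) \<le> 1 * k ^ n * norm v" .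
  qed
  have un: "\<forall>n. \<forall>v\<in>Eu. norm v \<le> 1 * (1/mu) ^ n * norm ((?L ^^ n) v)"
  proof (intro allI ballI)
    fix n and v :: "('a\<times>'b)\<times>real" assume "v \<in> Eu"
    then have v: "fst (fst v) = 0" "snd v = 0" by (auto simp: Eu_def)
    have A00: "(A ^^ n) 0 = 0" by (induction n) (auto simp: A0)
    have nv: "norm v = norm (snd (fst v))"
    proof -
      have "v = ((0, snd (fst v)), 0)" using v by (auto simp: prod_eq_iff)
      then have "norm v = norm ((0::'a, snd (fst v)), 0::real)" by metis
      then show ?thesis by (simp add: norm_Pair)
    qed
    have nL: "norm ((?L ^^ n) v) = norm ((B ^^ n) (snd (fst v)))"
    proof -
      have "(?L ^^ n) v = ((0, (B ^^ n) (snd (fst v))), 0)" by (simp add: iterL v A00)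
      then show ?thesis by (simp add: norm_Pair)
    qed
    have "mu ^ n * norm (snd (fst v)) \<le> norm ((B ^^ n) (snd (fst v)))"
      using iterB[OF Bu] \<open>1<mu\<close> by simp
    then have "norm (snd (fst v)) \<le> (1/mu) ^ n * norm ((B ^^ n) (snd (fst v)))"
      using \<open>1<mu\<close> by (simp add: field_simps power_divide)
    then show "norm v \<le> 1 * (1/mu) ^ n * norm ((?L ^^ n) v)" using nv nL by simp
  qed
  show ?thesis unfolding hyperbolic_linear_index_def
    apply (rule conjI[OF linL], rule exI[of _ Es], rule exI[of _ Eu])
    apply (intro conjI sEs sEu int dec iEs iEu dEu)
    subgoal using st \<open>0<k\<close> \<open>k<1\<close> by (intro exI[of _ "1::real"] exI[of _ k]) auto
    subgoal using un \<open>1<mu\<close> by (intro exI[of _ "1::real"] exI[of _ "1/mu"]) auto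
    done
qed

lemma hypQ:
  fixes A :: "'a::euclidean_space \<Rightarrow> 'a" and B :: "'b::euclidean_space \<Rightarrow> 'b"
  assumes lin: "linear A" "linear B"
    and As: "\<forall>x. norm (A x) \<le> ms * norm x" and Bu: "\<forall>y. norm (B y) \<ge> mu * norm y"
    and "0 < ms" "ms < 1" "1 < k" "k < mu"
  shows "hyperbolic_linear_index (\<lambda>v. ((A (fst (fst v)), B (snd (fst v))), k * snd v)) (DIM('b) + 1)"
proof -
  let ?L = "\<lambda>v::('a\<times>'b)\<times>real. ((A (fst (fst v)), B (snd (fst v))), k * snd v)"
  define Es where "Es = {v::('a\<times>'b)\<times>real. snd (fst v) = 0 \<and> snd v = 0}"
  define Eu where "Eu = {v::('a\<times>'b)\<times>real. fst (fst v) = 0}"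
  have A0: "A 0 = 0" and B0: "B 0 = 0" using lin linear_0 by auto
  have linL: "linear ?L"
    using lin unfolding linear_iff by (auto simp: algebra_simps)
  have sEs: "subspace Es" unfolding Es_def subspace_def by auto
  have sEu: "subspace Eu" unfolding Eu_def subspace_def by auto
  have int: "Es \<inter> Eu = {0}" unfolding Es_def Eu_def by (auto simp: prod_eq_iff)
  have dec: "\<forall>v. \<exists>a\<in>Es. \<exists>b\<in>Eu. v = a + b"
  proof
    fix v :: "('a\<times>'b)\<times>real"
    show "\<exists>a\<in>Es. \<exists>b\<in>Eu. v = a + b"
      by (rule bexI[where x="((fst (fst v), 0), 0)"], rule bexI[where x="((0, snd (fst v)), snd v)"])
         (auto simp: Es_def Eu_def prod_eq_iff)
  qed
  have iEs: "?L ` Es \<subseteq> Es" unfolding Es_def using B0 by auto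
  have iEu: "?L ` Eu \<subseteq> Eu" unfolding Eu_def using A0 by auto
  have dEu: "dim Eu = DIM('b) + 1"
  proof -
    have "Eu = (\<lambda>w. ((0::'a, fst w), snd w)) ` (UNIV :: ('b \<times> real) set)"
      unfolding Eu_def by (auto simp: image_iff prod_eq_iff)
    moreover have "linear (\<lambda>w::'b\<times>real. ((0::'a, fst w), snd w))" unfolding linear_iff by auto
    moreover have "inj_on (\<lambda>w::'b\<times>real. ((0::'a, fst w), snd w)) (span UNIV)" by (auto simp: inj_on_def prod_eq_iff)
    ultimately show ?thesis by (simp add: dim_image_eq)
  qed
  have st: "\<forall>n. \<forall>v\<in>Es. norm ((?L ^^ n) v) \<le> 1 * ms ^ n * norm v"
  proof (intro allI ballI)
    fix n and v :: "('a\<times>'b)\<times>real" assume "v \<in> Es"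
    then have v: "snd (fst v) = 0" "snd v = 0" by (auto simp: Es_def)
    have B00: "(B ^^ n) 0 = 0" by (induction n) (auto simp: B0)
    have e1: "(?L ^^ n) v = (((A ^^ n) (fst (fst v)), 0), 0)" by (simp add: iterL v B00)
    have e2: "v = ((fst (fst v), 0), 0)" using v by (auto simp: prod_eq_iff)
    have "norm ((?L ^^ n) v) = norm ((A ^^ n) (fst (fst v)))" unfolding e1 by (simp add: norm_Pair)
    also have "\<dots> \<le> ms ^ n * norm (fst (fst v))" using iterA[OF As] \<open>0<ms\<close> by simp
    also have "norm (fst (fst v)) = norm v" by (subst (2) e2) (simp add: norm_Pair)
    finally show "norm ((?L ^^ n) v) \<le> 1 * ms ^ n * norm v" by simp
  qed
  have un: "\<forall>n. \<forall>v\<in>Eu. norm v \<le> 1 * (1/k) ^ n * norm ((?L ^^ n) v)"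
  proof (intro allI ballI)
    fix n and v :: "('a\<times>'b)\<times>real" assume "v \<in> Eu"
    then have v: "fst (fst v) = 0" by (auto simp: Eu_def)
    have A00: "(A ^^ n) 0 = 0" by (induction n) (auto simp: A0)
    have e1: "(?L ^^ n) v = ((0, (B ^^ n) (snd (fst v))), k ^ n * snd v)" by (simp add: iterL v A00)
    have e2: "k ^ n *\<^sub>R v = ((0, k ^ n *\<^sub>R snd (fst v)), k ^ n * snd v)" using v by (auto simp: prod_eq_iff)
    have "norm (k ^ n *\<^sub>R snd (fst v)) \<le> norm ((B ^^ n) (snd (fst v)))"
    proof -
      have "norm (k ^ n *\<^sub>R snd (fst v)) = k ^ n * norm (snd (fst v))" using \<open>1<k\<close> by simp
      also have "\<dots> \<le> mu ^ n * norm (snd (fst v))"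
        using \<open>1<k\<close> \<open>k<mu\<close> by (intro mult_right_mono power_mono) auto
      also have "\<dots> \<le> norm ((B ^^ n) (snd (fst v)))" using iterB[OF Bu] \<open>1<k\<close> \<open>k<mu\<close> by simp
      finally show ?thesis .
    qed
    then have "norm (k ^ n *\<^sub>R v) \<le> norm ((?L ^^ n) v)"
      unfolding e1 e2 by (intro norm_pair_mono) (auto simp: norm_Pair)
    then have "k ^ n * norm v \<le> norm ((?L ^^ n) v)" using \<open>1<k\<close> by simp
    then show "norm v \<le> 1 * (1/k) ^ n * norm ((?L ^^ n) v)"
      using \<open>1<k\<close> by (simp add: field_simps power_divide)
  qed
  show ?thesis unfolding hyperbolic_linear_index_def
    apply (rule conjI[OF linL], rule exI[of _ Es], rule exI[of _ Eu])
    apply (intro conjI sEs sEu int dec iEs iEu dEu)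
    subgoal using st \<open>0<ms\<close> \<open>ms<1\<close> by (intro exI[of _ "1::real"] exI[of _ ms]) auto
    subgoal using un \<open>1<k\<close> by (intro exI[of _ "1::real"] exI[of _ "1/k"]) auto
    done
qed


lemma dyn1:
  fixes f :: "real \<Rightarrow> real"
  assumes cont: "continuous_on {0..1} f" and maps: "f ` {0..1} \<subseteq> {0..1}"
    and fixp: "{x\<in>{0..1}. f x = x} = {0, 1}"
    and der: "(f has_real_derivative b) (at 0 within {0..1})" and b: "b > 1"
  shows "\<exists>x. (\<forall>n. (f ^^ n) x \<in> {0..1}) \<and> (\<lambda>n. (f ^^ n) x) \<longlonglongrightarrow> 1 \<and>
     (\<exists>g. g 0 = x \<and> (\<forall>n. g n \<in> {0..1} \<and> f (g (Suc n)) = g n) \<and> g \<longlonglongrightarrow> 0)"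
proof -
  have f0: "f 0 = 0" and f1: "f 1 = 1" using fixp by auto
  have fixI: "\<And>z. z \<in> {0..1} \<Longrightarrow> f z = z \<Longrightarrow> z = 0 \<or> z = 1" using fixp by auto
  have "((\<lambda>y. (f y - f 0) / (y - 0)) \<longlongrightarrow> b) (at 0 within {0..1})"
    using der by (simp add: has_field_derivative_iff)
  then have "\<forall>\<^sub>F y in at 0 within {0..1}. 1 < (f y - f 0) / (y - 0)"
    using b by (rule order_tendstoD(1))
  then obtain d where d: "d > 0" "\<And>y. y \<in> {0..1} \<Longrightarrow> y \<noteq> 0 \<Longrightarrow> dist y 0 < d \<Longrightarrow> 1 < (f y - f 0) / (y - 0)"
    unfolding eventually_at by blast
  define y0 where "y0 = min (d/2) (1/2)"
  have y0: "0 < y0" "y0 < 1" using d unfolding y0_def by auto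
  have "1 < (f y0 - f 0) / (y0 - 0)" using d y0 by (intro d(2)) (auto simp: y0_def)
  then have fy0: "f y0 > y0" using y0 f0 by (simp add: field_simps)
  have gt: "f z > z" if z: "0 < z" "z < 1" for z
  proof (rule ccontr)
    assume "\<not> f z > z"
    then have le: "f z - z \<le> 0" by simp
    have c2: "continuous_on {a..c} (\<lambda>t. f t - t)" if "0 \<le> a" "c \<le> 1" for a c
      using that by (intro continuous_intros continuous_on_subset[OF cont]) auto
    have "\<exists>t. min z y0 \<le> t \<and> t \<le> max z y0 \<and> f t - t = 0"
    proof (cases "z \<le> y0")
      case True
      then show ?thesis using IVT'[of "\<lambda>t. f t - t" z 0 y0] le fy0 c2[of z y0] z y0 by auto
    next
      case False
      then show ?thesis using IVT2'[of "\<lambda>t. f t - t" z 0 y0] le fy0 c2[of y0 z] z y0 by auto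
    qed
    then obtain t where t: "min z y0 \<le> t" "t \<le> max z y0" "f t = t" by auto
    then have "t \<in> {0..1}" "0 < t" "t < 1" using z y0 by auto
    then show False using fixI[of t] t(3) by force
  qed
  define x where "x = (1/2::real)"
  have x: "0 < x" "x < 1" by (auto simp: x_def)
  have fin: "(f ^^ n) x \<in> {x..1}" for n
  proof (induction n)
    case 0 then show ?case using x by simp
  next
    case (Suc n)
    show ?case
    proof (cases "(f ^^ n) x = 1")
      case True then show ?thesis using f1 x by simp
    next
      case False
      then have "f ((f ^^ n) x) > (f ^^ n) x" using Suc x by (intro gt) auto
      moreover have "f ((f ^^ n) x) \<le> 1"
        using maps Suc x by (metis atLeastAtMost_iff image_subset_iff less_imp_le order_trans)
      ultimately show ?thesis using Suc by simp
    qed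
  qed
  have inc: "incseq (\<lambda>n. (f ^^ n) x)"
  proof (rule incseq_SucI)
    fix n
    show "(f ^^ n) x \<le> (f ^^ Suc n) x"
    proof (cases "(f ^^ n) x = 1")
      case True then show ?thesis using f1 by simp
    next
      case False
      then show ?thesis using fin[of n] x gt[of "(f ^^ n) x"] by auto
    qed
  qed
  obtain L where L: "(\<lambda>n. (f ^^ n) x) \<longlonglongrightarrow> L" "\<forall>i. (f ^^ i) x \<le> L"
    using incseq_convergent[OF inc, of 1] fin by auto
  have Lin: "L \<in> {x..1}"
    using L(2)[rule_format, of 0] LIMSEQ_le_const2[OF L(1), of 1] fin by auto
  have "(\<lambda>n. f ((f ^^ n) x)) \<longlonglongrightarrow> f L"
  proof (intro continuous_on_tendsto_compose[OF cont L(1)])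
    show "L \<in> {0..1}" using Lin x by auto
    show "\<forall>\<^sub>F n in sequentially. (f ^^ n) x \<in> {0..1}"
      using fin x by (intro always_eventually allI) (metis atLeastAtMost_iff less_imp_le order_trans)
  qed
  moreover have "(\<lambda>n. f ((f ^^ n) x)) \<longlonglongrightarrow> L"
    using LIMSEQ_Suc[OF L(1)] by simp
  ultimately have "f L = L" using LIMSEQ_unique by blast
  then have L1: "L = 1" using fixI[of L] Lin x by auto
  have pre: "\<exists>w. 0 < w \<and> w < z \<and> f w = z" if z: "0 < z" "z < 1" for z
  proof -
    have "\<exists>w. 0 \<le> w \<and> w \<le> z \<and> f w = z"
      using IVT'[of f 0 z z] f0 gt[OF z] z continuous_on_subset[OF cont, of "{0..z}"] by auto
    then obtain w where w: "0 \<le> w" "w \<le> z" "f w = z" by auto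
    have "w \<noteq> 0" using w f0 z by auto
    moreover have "w \<noteq> z" using w gt[OF z] by auto
    ultimately have "0 < w" "w < z" using w by auto
    then show ?thesis using w(3) by blast
  qed
  define pr where "pr z = (SOME w. 0 < w \<and> w < z \<and> f w = z)" for z
  have prp: "0 < pr z \<and> pr z < z \<and> f (pr z) = z" if "0 < z" "z < 1" for z
    unfolding pr_def using someI_ex[OF pre[OF that]] .
  define g where "g n = (pr ^^ n) x" for n
  have gin: "0 < g n \<and> g n \<le> x" for n
  proof (induction n)
    case 0 then show ?case using x by (simp add: g_def)
  next
    case (Suc n)
    then show ?case using prp[of "g n"] x by (auto simp: g_def)
  qed
  have gS: "f (g (Suc n)) = g n" "g (Suc n) \<le> g n" for n
    using prp[of "g n"] gin[of n] x by (auto simp: g_def)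
  have dec: "decseq g" using gS(2) by (intro decseq_SucI) auto
  obtain M where M: "g \<longlonglongrightarrow> M" "\<forall>i. M \<le> g i"
    using decseq_convergent[OF dec, of 0] gin by (auto intro: less_imp_le)
  have Min: "M \<in> {0..x}"
    using M(2)[rule_format, of 0] LIMSEQ_le_const[OF M(1), of 0] gin unfolding g_def
    by (auto intro: less_imp_le)
  have "(\<lambda>n. f (g (Suc n))) \<longlonglongrightarrow> f M"
  proof (intro continuous_on_tendsto_compose[OF cont LIMSEQ_Suc[OF M(1)]])
    show "M \<in> {0..1}" using Min x by auto
    show "\<forall>\<^sub>F n in sequentially. g (Suc n) \<in> {0..1}"
      using gin x by (intro always_eventually allI) (metis atLeastAtMost_iff less_imp_le order_trans)
  qed
  moreover have "(\<lambda>n. f (g (Suc n))) \<longlonglongrightarrow> M" using M(1) by (simp add: gS)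
  ultimately have "f M = M" using LIMSEQ_unique by blast
  then have M0: "M = 0" using fixI[of M] Min x by auto
  show ?thesis
    apply (rule exI[of _ x])
    apply (intro conjI)
    subgoal using fin x by (metis atLeastAtMost_iff less_imp_le order_trans)
    subgoal using L(1) L1 by simp
    apply (rule exI[of _ g])
    using gS gin x M(1) M0 apply (intro conjI allI)
       apply (simp add: g_def)
      apply (metis atLeastAtMost_iff less_imp_le order_trans)
     apply blast
    apply simp
    done
qed


lemma deriv_aux:
  fixes A :: "'a::euclidean_space \<Rightarrow> 'a" and B :: "'b::euclidean_space \<Rightarrow> 'b" and f :: "real \<Rightarrow> real"
  assumes lin: "linear A" "linear B"
    and fd: "(f has_real_derivative k) (at t within {0..1})"
    and S: "snd ` S \<subseteq> {0..1}"
  shows "((\<lambda>v. ((A (fst (fst v)) + a, B (snd (fst v)) + b), f (snd v))) has_derivative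
          (\<lambda>v. ((A (fst (fst v)), B (snd (fst v))), k * snd v))) (at (X0, t) within S)"
proof -
  have bA: "bounded_linear (\<lambda>v::('a\<times>'b)\<times>real. A (fst (fst v)))"
    unfolding linear_conv_bounded_linear[symmetric] using lin(1) unfolding linear_iff by simp
  have bB: "bounded_linear (\<lambda>v::('a\<times>'b)\<times>real. B (snd (fst v)))"
    unfolding linear_conv_bounded_linear[symmetric] using lin(2) unfolding linear_iff by simp
  have g: "(f has_derivative (\<lambda>x. k * x)) (at (snd (X0, t)) within snd ` S)"
    using has_derivative_subset[OF fd[unfolded has_field_derivative_def] S]
    by simp
  have h: "((\<lambda>v::('a\<times>'b)\<times>real. f (snd v)) has_derivative (\<lambda>v. k * snd v)) (at (X0, t) within S)"
    using has_derivative_in_compose[OF has_derivative_snd[OF has_derivative_ident] g] by simp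
  show ?thesis
    using has_derivative_Pair[OF has_derivative_Pair[OF
        has_derivative_add_const[OF bounded_linear_imp_has_derivative[OF bA]]
        has_derivative_add_const[OF bounded_linear_imp_has_derivative[OF bB]]] h]
    by simp
qed


lemma One_nth: "(One :: real^'n) $ i = 1"
proof -
  have "axis i (1::real) \<in> Basis" by (auto simp: Basis_vec_def)
  then have "inner One (axis i (1::real)) = 1" by (simp add: inner_sum_left_Basis)
  then show ?thesis by (simp add: cart_eq_inner_axis)
qed

theorem lemma2p6:
  fixes f0 f1 f0' f1' :: "real \<Rightarrow> real"
    and \<beta> lam \<alpha> \<alpha>bar \<gamma> \<gamma>' a0 b0 a1 b1 :: real and N :: nat
    and \<Phi> :: "(real^('s::finite)) \<times> (real^('u::finite)) \<Rightarrow> (real^'s) \<times> (real^'u)"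
    and D\<Phi> D\<Phi>inv :: "(real^'s) \<times> (real^'u) \<Rightarrow> ((real^'s) \<times> (real^'u)) \<Rightarrow>\<^sub>L ((real^'s) \<times> (real^'u))"
    and \<Gamma> :: "((real^'s) \<times> (real^'u)) set"
    and \<pi> :: "(real^'s) \<times> (real^'u) \<Rightarrow> (int \<Rightarrow> nat)"
    and Chat :: "nat \<Rightarrow> ((real^'s) \<times> (real^'u)) set"
    and p q :: "nat \<Rightarrow> real^'u" and c d :: "nat \<Rightarrow> real^'s"
    and A :: "nat \<Rightarrow> real^'s \<Rightarrow> real^'s" and B :: "nat \<Rightarrow> real^'u \<Rightarrow> real^'u"
    and cA :: "nat \<Rightarrow> real^'s" and cB :: "nat \<Rightarrow> real^'u"
    and \<mu>s \<mu>u :: real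
    and F :: "((real^'s) \<times> (real^'u)) \<times> real \<Rightarrow> ((real^'s) \<times> (real^'u)) \<times> real"
  assumes
    \<comment> \<open>f0, f1 are C^1 injective maps of [0,1] into [0,1]\<close>
    f0_C1: "\<forall>x\<in>{0..1}. (f0 has_real_derivative f0' x) (at x within {0..1})" "continuous_on {0..1} f0'"
    and f1_C1: "\<forall>x\<in>{0..1}. (f1 has_real_derivative f1' x) (at x within {0..1})" "continuous_on {0..1} f1'"
    and f0_maps: "f0 ` {0..1} \<subseteq> {0..1}" "inj_on f0 {0..1}"
    and f1_maps: "f1 ` {0..1} \<subseteq> {0..1}" "inj_on f1 {0..1}"
    \<comment> \<open>(F0.i)\<close>
    and F0i: "strict_mono_on {0..1} f0" "{x\<in>{0..1}. f0 x = x} = {0, 1}"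
      "f0' 0 = \<beta>" "\<beta> > 1" "f0' 1 = lam" "0 < lam" "lam < 1"
      "\<forall>x\<in>{0..1}. lam \<le> f0' x \<and> f0' x \<le> \<beta>"
    \<comment> \<open>(F0.ii)\<close>
    and F0ii: "0 < a0" "a0 \<le> b0" "b0 < 1" "b0 = f0 a0"
      "0 \<le> a1" "a1 \<le> b1" "b1 \<le> 1" "b1 = f0 a1"
      "\<alpha> > 1" "N \<ge> 1" "(f0 ^^ N) ` {a0..b0} = {a1..b1}"
      "\<forall>x\<in>{a0..b0}. lam * (\<Prod>k<N. f0' ((f0 ^^ k) x)) > \<alpha>"
      "\<forall>x\<in>{0..b0}. f0' x > 1" "\<forall>x\<in>{a1..1}. f0' x < 1"
    \<comment> \<open>(F1.i)\<close>
    and F1i: "\<forall>x\<in>{0..1}. \<forall>y\<in>{0..1}. x < y \<longrightarrow> f1 y < f1 x"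
      "\<gamma>' = (INF x\<in>{0..1}. \<bar>f1' x\<bar>)" "\<gamma> = (SUP x\<in>{0..1}. \<bar>f1' x\<bar>)" "\<gamma>' \<le> \<gamma>" "\<gamma> < 1"
    \<comment> \<open>(F1.ii)\<close>
    and F1ii: "\<alpha>bar > 1 / \<alpha>" "\<forall>x\<in>{f1 (f1 a1)..a1}. \<bar>f1' x\<bar> \<ge> \<alpha>bar"
    \<comment> \<open>(F01)\<close>
    and F01: "f1 1 = 0" "f1 ` {a1..1} \<subseteq> {0..<a0}"
      "{0..< inv_into {0..1} f0 (inv_into {0..1} f0 b0)} \<subseteq> f1 ` {0..1}"
    \<comment> \<open>\<Phi> is a C^1 diffeomorphism of R^(s+u)\<close>
    and \<Phi>_diffeo: "bij \<Phi>"
      "\<forall>z. (\<Phi> has_derivative blinfun_apply (D\<Phi> z)) (at z)" "continuous_on UNIV D\<Phi>"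
      "\<forall>z. (inv \<Phi> has_derivative blinfun_apply (D\<Phi>inv z)) (at z)" "continuous_on UNIV D\<Phi>inv"
    \<comment> \<open>sub-cubes \<open>Chat 0\<close>, \<open>Chat 1\<close>: full in the stable direction, thin in the unstable one\<close>
    and cubes: "\<forall>i\<in>{0,1}. Chat i = cbox 0 One \<times> cbox (p i) (q i)"
      "\<forall>i\<in>{0,1}. \<forall>j. 0 \<le> p i $ j \<and> p i $ j < q i $ j \<and> q i $ j \<le> 1"
      "cbox (p 0) (q 0) \<inter> cbox (p 1) (q 1) = {}"
    \<comment> \<open>\<Phi> is affine on each sub-cube, respecting the stable/unstable coordinates\<close>
    and affine: "\<forall>i\<in>{0,1}. linear (A i) \<and> linear (B i)"
      "\<forall>i\<in>{0,1}. \<forall>x y. (x, y) \<in> Chat i \<longrightarrow> \<Phi> (x, y) = (A i x + cA i, B i y + cB i)"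
    \<comment> \<open>Markov property: the image of each sub-cube crosses the cube fully in the unstable direction\<close>
    and markov: "\<forall>i\<in>{0,1}. \<Phi> ` Chat i = cbox (c i) (d i) \<times> cbox 0 One"
      "\<forall>i\<in>{0,1}. cbox (c i) (d i) \<subseteq> cbox 0 One \<and> cbox (c i) (d i) \<noteq> {}"
      "cbox (c 0) (d 0) \<inter> cbox (c 1) (d 1) = {}"
    \<comment> \<open>domination: unstable expansion stronger than \<beta>, stable contraction stronger than min lam \<gamma>'\<close>
    and domination: "0 < \<mu>s" "\<mu>s < min lam \<gamma>'" "\<mu>u > \<beta>"
      "\<forall>i\<in>{0,1}. \<forall>x. norm (A i x) \<le> \<mu>s * norm x"
      "\<forall>i\<in>{0,1}. \<forall>y. norm (B i y) \<ge> \<mu>u * norm y"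
    \<comment> \<open>the horseshoe \<Gamma> and its conjugacy \<pi> with the shift\<close>
    and horseshoe: "\<Gamma> \<subseteq> cbox 0 One" "compact \<Gamma>" "\<Phi> ` \<Gamma> = \<Gamma>"
      "bij_betw \<pi> \<Gamma> Sigma2" "continuous_on \<Gamma> \<pi>" "continuous_on Sigma2 (inv_into \<Gamma> \<pi>)"
      "\<forall>X\<in>\<Gamma>. \<pi> (\<Phi> X) = shift (\<pi> X)"
      "\<forall>i\<in>{0,1}. \<Gamma> \<inter> Chat i = {X\<in>\<Gamma>. \<pi> X 0 = i}"
    \<comment> \<open>\<theta> = \<pi>^-1(0^Z) = 0 and its local invariant manifolds\<close>
    and theta: "0 \<in> \<Gamma>" "\<pi> 0 = (\<lambda>n. 0)"
      "local_stable_manifold \<Phi> (cbox 0 One) 0 = cbox 0 One \<times> {0}"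
      "local_unstable_manifold \<Phi> (cbox 0 One) 0 = {0} \<times> cbox 0 One"
    \<comment> \<open>the skew product F on C = Chat \<times> [0,1]\<close>
    and F_def: "\<forall>X\<in>Chat 0. \<forall>x\<in>{0..1}. F (X, x) = (\<Phi> X, f0 x)"
      "\<forall>X\<in>Chat 1. \<forall>x\<in>{0..1}. F (X, x) = (\<Phi> X, f1 x)"
  shows
    "saddle_of_index F ((Chat 0 \<union> Chat 1) \<times> {0..1}) (0, 1) CARD('u)
     \<and> saddle_of_index F ((Chat 0 \<union> Chat 1) \<times> {0..1}) (0, 0) (CARD('u) + 1)
     \<and> stable_set F ((Chat 0 \<union> Chat 1) \<times> {0..1}) (0, 1)
         \<inter> unstable_set F ((Chat 0 \<union> Chat 1) \<times> {0..1}) (0, 0) \<noteq> {}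
     \<and> unstable_set F ((Chat 0 \<union> Chat 1) \<times> {0..1}) (0, 1)
         \<inter> stable_set F ((Chat 0 \<union> Chat 1) \<times> {0..1}) (0, 0) \<noteq> {}"
proof -
  define D where "D = (Chat 0 \<union> Chat 1) \<times> {0..1::real}"
  have lin0: "linear (A 0)" "linear (B 0)" and lin1: "linear (A 1)" "linear (B 1)"
    using affine(1) by auto
  have aff0: "\<And>x y. (x, y) \<in> Chat 0 \<Longrightarrow> \<Phi> (x, y) = (A 0 x + cA 0, B 0 y + cB 0)"
    and aff1: "\<And>x y. (x, y) \<in> Chat 1 \<Longrightarrow> \<Phi> (x, y) = (A 1 x + cA 1, B 1 y + cB 1)"
    using affine(2) by auto
  have C0: "Chat 0 = cbox 0 One \<times> cbox (p 0) (q 0)" and C1: "Chat 1 = cbox 0 One \<times> cbox (p 1) (q 1)"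
    using cubes(1) by auto
  have M0: "\<Phi> ` Chat 0 = cbox (c 0) (d 0) \<times> cbox 0 One" and M1: "\<Phi> ` Chat 1 = cbox (c 1) (d 1) \<times> cbox 0 One"
    using markov(1) by auto
  have cd0: "cbox (c 0) (d 0) \<subseteq> cbox 0 One" and cd1: "cbox (c 1) (d 1) \<subseteq> cbox 0 One" "cbox (c 1) (d 1) \<noteq> {}"
    using markov(2) by auto
  have injP: "inj \<Phi>" using \<Phi>_diffeo(1) bij_is_inj by blast
  have z0: "(0::(real^'s)\<times>(real^'u)) \<in> Chat 0" using horseshoe(8) theta(1,2) by auto
  have z1: "(0::(real^'s)\<times>(real^'u)) \<notin> Chat 1"
  proof
    assume "(0::(real^'s)\<times>(real^'u)) \<in> Chat 1"
    then have "0 \<in> {X\<in>\<Gamma>. \<pi> X 0 = 1}" using horseshoe(8) theta(1) by blast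
    then show False using theta(2) by simp
  qed
  have Phi0: "\<Phi> 0 = 0"
  proof -
    have "\<Phi> 0 \<in> \<Gamma>" using horseshoe(3) theta(1) by blast
    moreover have "\<pi> (\<Phi> 0) = \<pi> 0" using horseshoe(7) theta(1,2) by (auto simp: shift_def)
    ultimately show ?thesis using horseshoe(4) theta(1) unfolding bij_betw_def inj_on_def by blast
  qed
  have cA0: "cA 0 = 0" and cB0: "cB 0 = 0"
  proof -
    have "(0::real^'s, 0::real^'u) \<in> Chat 0" using z0 by (simp add: zero_prod_def)
    then have "\<Phi> (0, 0) = (cA 0, cB 0)" using aff0 lin0 by (simp add: linear_0)
    then show "cA 0 = 0" "cB 0 = 0" using Phi0 by (auto simp: zero_prod_def)
  qed
  have pq0: "(0::real^'u) \<in> cbox (p 0) (q 0)" using z0 C0 by (auto simp: zero_prod_def)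
  have c00: "(0::real^'s) \<in> cbox (c 0) (d 0)"
  proof -
    have "\<Phi> 0 \<in> \<Phi> ` Chat 0" using z0 by blast
    then show ?thesis using Phi0 M0 by (auto simp: zero_prod_def)
  qed
  have ZO: "(0::real^'s) \<in> cbox 0 One" "(0::real^'u) \<in> cbox 0 One"
    by (auto simp: mem_box)
  have f0C: "continuous_on {0..1} f0"
    using f0_C1(1) DERIV_continuous continuous_on_eq_continuous_within by blast
  have f0fix: "f0 0 = 0" "f0 1 = 1" using F0i(2) by auto
  have f0d0: "(f0 has_real_derivative \<beta>) (at 0 within {0..1})" using f0_C1(1) F0i(3) by auto
  have f0d1: "(f0 has_real_derivative lam) (at 1 within {0..1})" using f0_C1(1) F0i(5) by auto
  have Fz: "\<And>t. t \<in> {0..1} \<Longrightarrow> F (0, t) = (0, f0 t)" using F_def(1) z0 Phi0 by auto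
  obtain e where e: "e > 0" "\<And>X. dist X 0 < e \<Longrightarrow> X \<notin> Chat 1"
  proof -
    have "closed (Chat 1)" unfolding C1 by (intro closed_Times closed_cbox)
    then have "open (- Chat 1)" by auto
    then obtain e where "e > 0" "ball 0 e \<subseteq> - Chat 1" using z1 open_contains_ball by blast
    then show ?thesis using that[of e] by (metis ComplD dist_commute mem_ball subsetD)
  qed
  have loc: "F v = ((A 0 (fst (fst v)) + cA 0, B 0 (snd (fst v)) + cB 0), f0 (snd v))"
    if "v \<in> D" "dist v (0, t0) < e" for v t0
  proof -
    have "dist (fst v) 0 < e" using dist_fst_le[of v "(0,t0)"] that(2) by simp
    then have "fst v \<in> Chat 0" "snd v \<in> {0..1}" using e(2) that(1) by (auto simp: D_def)
    then show ?thesis using F_def(1) aff0[of "fst (fst v)" "snd (fst v)"]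
      by (metis prod.collapse)
  qed
  have sndD: "snd ` D \<subseteq> {0..1}" by (auto simp: D_def)
  have derP: "(F has_derivative (\<lambda>v. ((A 0 (fst (fst v)), B 0 (snd (fst v))), lam * snd v))) (at (0, 1) within D)"
    by (rule has_derivative_transform_within[OF deriv_aux[OF lin0 f0d1 sndD] e(1)])
       (auto simp: D_def z0 loc)
  have derQ: "(F has_derivative (\<lambda>v. ((A 0 (fst (fst v)), B 0 (snd (fst v))), \<beta> * snd v))) (at (0, 0) within D)"
    by (rule has_derivative_transform_within[OF deriv_aux[OF lin0 f0d0 sndD] e(1)])
       (auto simp: D_def z0 loc)
  have As: "\<forall>x. norm (A 0 x) \<le> \<mu>s * norm x" and Bu: "\<forall>y. norm (B 0 y) \<ge> \<mu>u * norm y"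
    using domination(4,5) by auto
  have cardu: "0 < CARD('u)" "0 < CARD('s)" by auto
  have hP: "hyperbolic_linear_index (\<lambda>v::((real^'s)\<times>(real^'u))\<times>real. ((A 0 (fst (fst v)), B 0 (snd (fst v))), lam * snd v)) CARD('u)"
    using hypP[OF lin0 As Bu, of lam] domination F0i by simp
  have hQ: "hyperbolic_linear_index (\<lambda>v::((real^'s)\<times>(real^'u))\<times>real. ((A 0 (fst (fst v)), B 0 (snd (fst v))), \<beta> * snd v)) (CARD('u) + 1)"
    using hypQ[OF lin0 As Bu, of \<beta>] domination F0i by simp
  have S1: "saddle_of_index F D (0, 1) CARD('u)"
    unfolding saddle_of_index_def
    using z0 Fz[of 1] f0fix cardu derP hP by (auto simp: D_def)
  have S2: "saddle_of_index F D (0, 0) (CARD('u) + 1)"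
    unfolding saddle_of_index_def
    using z0 Fz[of 0] f0fix cardu derQ hQ by (auto simp: D_def)
  have H1: "stable_set F D (0, 1) \<inter> unstable_set F D (0, 0) \<noteq> {}"
  proof -
    obtain x g where x: "\<forall>n. (f0 ^^ n) x \<in> {0..1}" "(\<lambda>n. (f0 ^^ n) x) \<longlonglongrightarrow> 1"
      and g: "g 0 = x" "\<forall>n. g n \<in> {0..1} \<and> f0 (g (Suc n)) = g n" "g \<longlonglongrightarrow> 0"
      using dyn1[OF f0C f0_maps(1) F0i(2) f0d0 F0i(4)] by blast
    have orb: "(F ^^ n) (0, x) = (0, (f0 ^^ n) x)" for n
      by (induction n) (use x Fz in auto)
    have "(0, x) \<in> stable_set F D (0, 1)"
      unfolding stable_set_def
    proof (intro CollectI conjI allI)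
      fix n show "(F ^^ n) (0, x) \<in> D" using orb x z0 by (simp add: D_def)
    next
      show "(\<lambda>n. (F ^^ n) (0, x)) \<longlonglongrightarrow> (0, 1)"
        unfolding orb by (intro tendsto_Pair tendsto_const x(2))
    qed
    moreover have "(0, x) \<in> unstable_set F D (0, 0)"
      unfolding unstable_set_def
    proof (intro CollectI exI[of _ "\<lambda>n. (0, g n)"] conjI allI)
      show "(0, g 0) = (0, x)" using g by simp
    next
      fix n
      show "(0, g n) \<in> D" using g z0 by (simp add: D_def)
      show "F (0, g (Suc n)) = (0, g n)" using g Fz by simp
    next
      show "(\<lambda>n. (0, g n)) \<longlonglongrightarrow> (0, 0)" by (intro tendsto_Pair tendsto_const g(3))
    qed
    ultimately show ?thesis by blast
  qed
  have H2: "unstable_set F D (0, 1) \<inter> stable_set F D (0, 0) \<noteq> {}"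
  proof -
    obtain z where z: "z \<in> cbox (c 1) (d 1)" using cd1(2) by blast
    have "(z, 0) \<in> \<Phi> ` Chat 1" using M1 z ZO(2) by auto
    then obtain wx wy where W: "(wx, wy) \<in> Chat 1" "\<Phi> (wx, wy) = (z, 0)" by auto
    have Bw: "B 1 wy + cB 1 = 0" using aff1[OF W(1)] W(2) by simp
    define X0 where "X0 = (0::real^'s, wy)"
    have wyC: "wy \<in> cbox (p 1) (q 1)" using W(1) C1 by auto
    have X0C1: "X0 \<in> Chat 1" using wyC C1 ZO(1) by (auto simp: X0_def)
    have PX0: "\<Phi> X0 = (cA 1, 0)" using aff1[of 0 wy] X0C1 lin1 Bw by (simp add: X0_def linear_0)
    have cA1: "cA 1 \<in> cbox 0 One"
    proof -
      have "\<Phi> X0 \<in> \<Phi> ` Chat 1" using X0C1 by blast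
      then show ?thesis using PX0 M1 cd1(1) by auto
    qed
    have ZSC0: "\<And>x. x \<in> cbox 0 One \<Longrightarrow> (x, 0) \<in> Chat 0" using C0 pq0 by auto
    have ZSinv: "\<Phi> (x, 0) = (A 0 x, 0) \<and> A 0 x \<in> cbox 0 One" if "x \<in> cbox 0 One" for x
    proof -
      have e1: "\<Phi> (x, 0) = (A 0 x, 0)" using aff0[OF ZSC0[OF that]] lin0 cA0 cB0 by (simp add: linear_0)
      have "\<Phi> (x, 0) \<in> \<Phi> ` Chat 0" using ZSC0[OF that] by blast
      then have "A 0 x \<in> cbox (c 0) (d 0)" using e1 M0 by auto
      then show ?thesis using e1 cd0 by auto
    qed
    define Y0 where "Y0 = (cA 1, 0::real^'u)"
    have orbPhi: "\<exists>w. (\<Phi> ^^ n) Y0 = (w, 0) \<and> w \<in> cbox 0 One" for n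
    proof (induction n)
      case 0 then show ?case using cA1 by (simp add: Y0_def)
    next
      case (Suc n)
      then obtain w where "(\<Phi> ^^ n) Y0 = (w, 0)" "w \<in> cbox 0 One" by blast
      then show ?case using ZSinv[of w] by auto
    qed
    have Yst: "(\<lambda>n. (\<Phi> ^^ n) Y0) \<longlonglongrightarrow> 0"
    proof -
      have "Y0 \<in> local_stable_manifold \<Phi> (cbox 0 One) 0" using theta(3) cA1 by (simp add: Y0_def)
      then have "Y0 \<in> stable_set \<Phi> (cbox 0 One) 0"
        unfolding local_stable_manifold_def using connected_component_subset by blast
      then show ?thesis unfolding stable_set_def by blast
    qed
    have Forb: "(F ^^ n) (Y0, 0) = ((\<Phi> ^^ n) Y0, 0)" for n
    proof (induction n)
      case 0 then show ?case by simp
    next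
      case (Suc n)
      obtain w where w: "(\<Phi> ^^ n) Y0 = (w, 0)" "w \<in> cbox 0 One" using orbPhi by blast
      have "(F ^^ Suc n) (Y0, 0) = F ((\<Phi> ^^ n) Y0, 0)" using Suc by simp
      also have "\<dots> = (\<Phi> ((\<Phi> ^^ n) Y0), f0 0)" using F_def(1) ZSC0[OF w(2)] w(1) by simp
      finally show ?case using f0fix by simp
    qed
    define V0 where "V0 = (X0, 1::real)"
    have FV0: "F V0 = (Y0, 0)" using F_def(2) X0C1 PX0 F01(1) by (simp add: V0_def Y0_def)
    have FVn: "(F ^^ Suc n) V0 = ((\<Phi> ^^ n) Y0, 0)" for n
      using Forb[of n] FV0 by (simp only: funpow_Suc_right o_apply)
    have "V0 \<in> stable_set F D (0, 0)"
      unfolding stable_set_def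
    proof (intro CollectI conjI allI)
      fix n show "(F ^^ n) V0 \<in> D"
      proof (cases n)
        case 0 then show ?thesis using X0C1 by (simp add: D_def V0_def)
      next
        case (Suc m)
        obtain w where "(\<Phi> ^^ m) Y0 = (w, 0)" "w \<in> cbox 0 One" using orbPhi by blast
        then show ?thesis using Suc FVn[of m] ZSC0 by (simp add: D_def)
      qed
    next
      have "(\<lambda>n. (F ^^ Suc n) V0) \<longlonglongrightarrow> (0, 0)"
        unfolding FVn by (intro tendsto_Pair tendsto_const Yst)
      then show "(\<lambda>n. (F ^^ n) V0) \<longlonglongrightarrow> (0, 0)" by (rule LIMSEQ_imp_Suc)
    qed
    moreover have "V0 \<in> unstable_set F D (0, 1)"
    proof -
      define Wu where "Wu = unstable_set \<Phi> (cbox 0 One) 0"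
      define U where "U = connected_component_set Wu 0"
      have Ueq: "U = {0} \<times> cbox 0 One" using theta(4) unfolding U_def Wu_def local_unstable_manifold_def .
      have Usub: "U \<subseteq> Wu" unfolding U_def using connected_component_subset by blast
      have isc: "isCont (inv \<Phi>) x" for x using \<Phi>_diffeo(4) has_derivative_continuous by blast
      have contInv: "continuous_on UNIV (inv \<Phi>)" by (intro continuous_at_imp_continuous_on ballI isc)
      have invf: "inv \<Phi> (\<Phi> x) = x" for x using injP by (simp add: inv_f_f)
      have invW: "inv \<Phi> w \<in> Wu" if wW: "w \<in> Wu" for w
      proof -
        obtain \<xi> where \<xi>: "\<xi> 0 = w" "\<forall>n. \<xi> n \<in> cbox 0 One \<and> \<Phi> (\<xi> (Suc n)) = \<xi> n" "\<xi> \<longlonglongrightarrow> 0"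
          using wW unfolding Wu_def unstable_set_def by blast
        have "inv \<Phi> w = \<xi> 1" using \<xi>(1,2) invf by (metis One_nat_def)
        moreover have "\<xi> 1 \<in> Wu" unfolding Wu_def unstable_set_def
          using \<xi>(2) LIMSEQ_Suc[OF \<xi>(3)] by (intro CollectI exI[of _ "\<lambda>n. \<xi> (Suc n)"]) auto
        ultimately show ?thesis by simp
      qed
      have U0: "0 \<in> U" using Ueq ZO by (auto simp: zero_prod_def)
      have inv0: "inv \<Phi> 0 = 0" using invf[of 0] Phi0 by simp
      have invU: "inv \<Phi> ` U \<subseteq> U"
        unfolding U_def
      proof (rule connected_component_maximal)
        show "0 \<in> inv \<Phi> ` connected_component_set Wu 0" using U0 inv0 unfolding U_def by force
        show "connected (inv \<Phi> ` connected_component_set Wu 0)"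
          by (rule connected_continuous_image[OF continuous_on_subset[OF contInv] connected_connected_component]) auto
        show "inv \<Phi> ` connected_component_set Wu 0 \<subseteq> Wu" using invW Usub unfolding U_def by blast
      qed
      have pq1: "\<forall>j. 0 \<le> p 1 $ j \<and> q 1 $ j \<le> 1" using cubes(2) by auto
      have wy1: "wy \<in> cbox 0 One" using wyC pq1 unfolding mem_box_cart One_nth zero_index
        by (meson order_trans)
      have "X0 \<in> U" using Ueq wy1 by (simp add: X0_def)
      then obtain \<zeta> where \<zeta>: "\<zeta> 0 = X0" "\<forall>n. \<zeta> n \<in> cbox 0 One \<and> \<Phi> (\<zeta> (Suc n)) = \<zeta> n" "\<zeta> \<longlonglongrightarrow> 0"
        using Usub unfolding Wu_def unstable_set_def by blast
      have zS: "\<zeta> (Suc n) = inv \<Phi> (\<zeta> n)" for n using \<zeta>(2) invf by metis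
      have zU: "\<zeta> n \<in> U" for n
        by (induction n) (use \<open>X0 \<in> U\<close> \<zeta>(1) zS invU in auto)
      have zC0: "\<zeta> (Suc n) \<in> Chat 0" for n
      proof -
        have "\<zeta> n \<in> {0} \<times> cbox 0 One" using zU Ueq by auto
        then have "\<zeta> n \<in> \<Phi> ` Chat 0" using M0 c00 by auto
        then obtain Wn where Wn: "Wn \<in> Chat 0" "\<Phi> Wn = \<zeta> n" by (metis imageE)
        then have "\<Phi> Wn = \<Phi> (\<zeta> (Suc n))" using \<zeta>(2) by simp
        then have "Wn = \<zeta> (Suc n)" using injP by (simp add: inj_eq)
        then show ?thesis using Wn(1) by simp
      qed
      show ?thesis
        unfolding unstable_set_def
      proof (intro CollectI exI[of _ "\<lambda>n. (\<zeta> n, 1::real)"] conjI allI)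
        show "(\<zeta> 0, 1) = V0" using \<zeta>(1) by (simp add: V0_def)
      next
        fix n
        show "(\<zeta> n, 1::real) \<in> D"
          by (cases n) (use \<zeta>(1) X0C1 zC0 in \<open>auto simp: D_def\<close>)
        show "F (\<zeta> (Suc n), 1) = (\<zeta> n, 1)" using F_def(1) zC0[of n] \<zeta>(2) f0fix by simp
      next
        show "(\<lambda>n. (\<zeta> n, 1::real)) \<longlonglongrightarrow> (0, 1)" by (intro tendsto_Pair tendsto_const \<zeta>(3))
      qed
    qed
    ultimately show ?thesis by blast
  qed
  show ?thesis using S1 S2 H1 H2 unfolding D_def by blast
qed


end
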